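(* If $q>0$ is an equilibrium price of the TWDPP mechanism, then $\mathrm{Welfare}(\vec x(q))\ge\frac{\mathrm{OPT}}{2(1+\delta)}\min\{1,\delta\}$.
   Context: Dynamic posted-price setting: at each time step a block with $m$ slots is produced; $n$ bidders arrive with values $v_1,\dots,v_n$ drawn i.i.d. from a distribution $F$, each participating once and bidding truthfully. Given posted price $q>0$, $M(q)=\{i:v_i\ge q\}$, $N(q)=|M(q)|$. TWDPP: $B$ is chosen uniformly at random among subsets of $M(q)$ of size $\min\{m,N(q)\}$; $x_i(q)=1$ if $i\in B$ (and $i$ pays $q$), else $0$; the next price is $T_{TW}(q,B)=\alpha\frac1m\sum_{i\in B}\min\{b_i,(1+\delta)q\}+(1-\alpha)q$ if $|B|<m$ and $\alpha(1+\delta)q+(1-\alpha)q$ if $|B|=m$, with $\alpha\in(0,1)$, $\delta\in(0,\infty)$. An equilibrium price is a price $q$ with $\mathbb{E}[T_{TW}(q,B)]=q$, expectation over values and the random allocation. $\mathrm{Welfare}(\vec x(q))=\mathbb{E}[\sum_i v_i x_i(q)]$, and $\mathrm{OPT}$ is the expected sum of the $\min\{m,n\}$ largest values. *)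

theory Defs
  imports "HOL-Probability.Probability"
begin

text \<open>Bidders are indexed by 0..n-1; a value profile is v :: nat => real
  (only the entries below n matter).\<close>

definition winners_set :: "nat \<Rightarrow> real \<Rightarrow> (nat \<Rightarrow> real) \<Rightarrow> nat set" where
  "winners_set n q v = {i \<in> {..<n}. v i \<ge> q}"

definition num_above :: "nat \<Rightarrow> real \<Rightarrow> (nat \<Rightarrow> real) \<Rightarrow> nat" where
  "num_above n q v = card (winners_set n q v)"

definition blocks :: "nat \<Rightarrow> nat \<Rightarrow> real \<Rightarrow> (nat \<Rightarrow> real) \<Rightarrow> nat set set" where
  "blocks m n q v = {B. B \<subseteq> winners_set n q v \<and> card B = min m (num_above n q v)}"

definition tw_alloc :: "nat \<Rightarrow> nat \<Rightarrow> real \<Rightarrow> (nat \<Rightarrow> real) \<Rightarrow> nat set pmf" where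
  "tw_alloc m n q v = pmf_of_set (blocks m n q v)"

definition T_TW :: "real \<Rightarrow> real \<Rightarrow> nat \<Rightarrow> real \<Rightarrow> (nat \<Rightarrow> real) \<Rightarrow> nat set \<Rightarrow> real" where
  "T_TW \<alpha> \<delta> m q v B =
     (if card B < m
      then \<alpha> * (1 / real m) * (\<Sum>i\<in>B. min (v i) ((1 + \<delta>) * q)) + (1 - \<alpha>) * q
      else \<alpha> * (1 + \<delta>) * q + (1 - \<alpha>) * q)"

definition values_measure :: "nat \<Rightarrow> real measure \<Rightarrow> (nat \<Rightarrow> real) measure" where
  "values_measure n F = PiM {..<n} (\<lambda>_. F)"

definition expected_T :: "real \<Rightarrow> real \<Rightarrow> nat \<Rightarrow> nat \<Rightarrow> real measure \<Rightarrow> real \<Rightarrow> real" where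
  "expected_T \<alpha> \<delta> m n F q =
     (\<integral>v. measure_pmf.expectation (tw_alloc m n q v) (\<lambda>B. T_TW \<alpha> \<delta> m q v B)
        \<partial>values_measure n F)"

definition equilibrium_price :: "real \<Rightarrow> real \<Rightarrow> nat \<Rightarrow> nat \<Rightarrow> real measure \<Rightarrow> real \<Rightarrow> bool" where
  "equilibrium_price \<alpha> \<delta> m n F q \<longleftrightarrow> expected_T \<alpha> \<delta> m n F q = q"

definition welfare :: "nat \<Rightarrow> nat \<Rightarrow> real measure \<Rightarrow> real \<Rightarrow> real" where
  "welfare m n F q =
     (\<integral>v. measure_pmf.expectation (tw_alloc m n q v)
            (\<lambda>B. \<Sum>i<n. v i * (if i \<in> B then 1 else 0))
        \<partial>values_measure n F)"

definition top_sum :: "nat \<Rightarrow> nat \<Rightarrow> (nat \<Rightarrow> real) \<Rightarrow> real" where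
  "top_sum k n v = sum_list (take k (rev (sort (map v [0..<n]))))"

definition OPT :: "nat \<Rightarrow> nat \<Rightarrow> real measure \<Rightarrow> real" where
  "OPT m n F = (\<integral>v. top_sum (min m n) n v \<partial>values_measure n F)"

end

theory Submission
  imports Defs
begin



definition Nr :: "nat \<Rightarrow> real \<Rightarrow> (nat \<Rightarrow> real) \<Rightarrow> real" where
  "Nr n q v = (\<Sum>i<n. if q \<le> v i then 1 else 0)"

definition Xf :: "real \<Rightarrow> nat \<Rightarrow> nat \<Rightarrow> real \<Rightarrow> (nat \<Rightarrow> real) \<Rightarrow> real" where
  "Xf \<delta> m n q v = (if Nr n q v < real m
     then (1 / real m) * (\<Sum>i<n. if q \<le> v i then min (v i) ((1 + \<delta>) * q) else 0)
     else (1 + \<delta>) * q)"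

definition Aq :: "nat \<Rightarrow> real \<Rightarrow> (nat \<Rightarrow> real) \<Rightarrow> real" where
  "Aq n q v = (\<Sum>i<n. max (v i - q) 0)"

definition Lf :: "nat \<Rightarrow> nat \<Rightarrow> real \<Rightarrow> (nat \<Rightarrow> real) \<Rightarrow> real" where
  "Lf m n q v = q * min (real m) (Nr n q v) + (if Nr n q v \<le> real m then Aq n q v else 0)"

lemma winners_sub: "winners_set n q v \<subseteq> {..<n}"
  by (auto simp: winners_set_def)

lemma winners_fin: "finite (winners_set n q v)"
  by (rule finite_subset[OF winners_sub]) simp

lemma Nr_card: "Nr n q v = real (num_above n q v)"
proof -
  have "(\<Sum>i<n. if q \<le> v i then 1 else (0::real)) = (\<Sum>i\<in>{i\<in>{..<n}. q \<le> v i}. 1)"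
    by (subst sum.inter_filter) auto
  also have "\<dots> = real (card {i\<in>{..<n}. q \<le> v i})" by simp
  finally show ?thesis by (simp only: Nr_def num_above_def winners_set_def)
qed

lemma blocks_fin: "finite (blocks m n q v)"
proof -
  have "blocks m n q v \<subseteq> Pow (winners_set n q v)" by (auto simp: blocks_def)
  then show ?thesis by (rule finite_subset) (simp add: winners_fin)
qed

lemma blocks_ne: "blocks m n q v \<noteq> {}"
proof -
  have "min m (num_above n q v) \<le> card (winners_set n q v)" by (simp add: num_above_def)
  then obtain T where "T \<subseteq> winners_set n q v" "card T = min m (num_above n q v)"
    by (rule obtain_subset_with_card_n)
  then show ?thesis by (auto simp: blocks_def)
qed

lemma blocks_small:
  assumes "num_above n q v \<le> m"
  shows "blocks m n q v = {winners_set n q v}"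
proof -
  have "B = winners_set n q v" if "B \<in> blocks m n q v" for B
  proof -
    have "B \<subseteq> winners_set n q v" "card B = card (winners_set n q v)"
      using that assms by (auto simp: blocks_def num_above_def)
    then show ?thesis using card_subset_eq[OF winners_fin] by blast
  qed
  moreover have "winners_set n q v \<in> blocks m n q v"
    using assms by (auto simp: blocks_def num_above_def)
  ultimately show ?thesis by blast
qed

lemma exp_const:
  fixes f :: "nat set \<Rightarrow> real"
  assumes "\<And>B. B \<in> blocks m n q v \<Longrightarrow> f B = c"
  shows "measure_pmf.expectation (tw_alloc m n q v) f = c"
proof -
  have "measure_pmf.expectation (tw_alloc m n q v) f = sum f (blocks m n q v) / card (blocks m n q v)"
    unfolding tw_alloc_def by (rule integral_pmf_of_set[OF blocks_ne blocks_fin])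
  also have "\<dots> = c"
    using assms blocks_ne[of m n q v] blocks_fin[of m n q v] by simp
  finally show ?thesis .
qed

lemma exp_ge:
  fixes f :: "nat set \<Rightarrow> real"
  assumes "\<And>B. B \<in> blocks m n q v \<Longrightarrow> f B \<ge> c"
  shows "measure_pmf.expectation (tw_alloc m n q v) f \<ge> c"
proof -
  have e: "measure_pmf.expectation (tw_alloc m n q v) f = sum f (blocks m n q v) / card (blocks m n q v)"
    unfolding tw_alloc_def by (rule integral_pmf_of_set[OF blocks_ne blocks_fin])
  have s1: "sum f (blocks m n q v) \<ge> sum (\<lambda>_. c) (blocks m n q v)"
    using assms by (intro sum_mono) auto
  moreover have "card (blocks m n q v) > 0"
    using blocks_ne blocks_fin by (simp add: card_gt_0_iff)
  then have cp: "real (card (blocks m n q v)) > 0" by simp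
  moreover have "sum (\<lambda>_. c) (blocks m n q v) = c * real (card (blocks m n q v))"
    by (simp add: mult.commute)
  ultimately have "c * real (card (blocks m n q v)) \<le> sum f (blocks m n q v)" by linarith
  then show ?thesis using pos_le_divide_eq[OF cp] e by simp
qed

lemma sum_winners: "(\<Sum>i\<in>winners_set n q v. g i) = (\<Sum>i<n. if q \<le> v i then g i else 0)"
  unfolding winners_set_def by (rule sum.inter_filter) simp

lemma ET_pointwise:
  "measure_pmf.expectation (tw_alloc m n q v) (T_TW \<alpha> \<delta> m q v) = \<alpha> * Xf \<delta> m n q v + (1 - \<alpha>) * q"
proof (cases "num_above n q v < m")
  case True
  then have bs: "blocks m n q v = {winners_set n q v}" by (intro blocks_small) auto
  show ?thesis
  proof (rule exp_const)
    fix B assume "B \<in> blocks m n q v"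
    then have B: "B = winners_set n q v" using bs by auto
    have c: "card B < m" using B True by (simp add: num_above_def)
    have x: "Nr n q v < real m" using True by (simp add: Nr_card)
    have t: "T_TW \<alpha> \<delta> m q v B = \<alpha> * (1 / real m) * (\<Sum>i<n. if q \<le> v i then min (v i) ((1 + \<delta>) * q) else 0) + (1 - \<alpha>) * q"
      using c by (simp add: T_TW_def B sum_winners)
    have xx: "Xf \<delta> m n q v = (1 / real m) * (\<Sum>i<n. if q \<le> v i then min (v i) ((1 + \<delta>) * q) else 0)"
      using x by (simp add: Xf_def)
    show "T_TW \<alpha> \<delta> m q v B = \<alpha> * Xf \<delta> m n q v + (1 - \<alpha>) * q"
      unfolding t xx by (simp add: mult.assoc)
  qed
next
  case False
  show ?thesis
  proof (rule exp_const)
    fix B assume "B \<in> blocks m n q v"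
    then have "card B = m" using False by (auto simp: blocks_def)
    then have t: "T_TW \<alpha> \<delta> m q v B = \<alpha> * (1 + \<delta>) * q + (1 - \<alpha>) * q"
      by (simp add: T_TW_def)
    have x: "\<not> Nr n q v < real m" using False by (simp add: Nr_card)
    then have xx: "Xf \<delta> m n q v = (1 + \<delta>) * q" by (simp add: Xf_def)
    show "T_TW \<alpha> \<delta> m q v B = \<alpha> * Xf \<delta> m n q v + (1 - \<alpha>) * q"
      unfolding t xx by (simp add: mult.assoc)
  qed
qed

lemma W_pointwise:
  assumes q: "q > 0"
  shows "measure_pmf.expectation (tw_alloc m n q v) (\<lambda>B. \<Sum>i<n. v i * (if i \<in> B then 1 else 0))
     \<ge> Lf m n q v"
proof (rule exp_ge)
  fix B assume B: "B \<in> blocks m n q v"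
  then have Bsub: "B \<subseteq> winners_set n q v" and cB: "card B = min m (num_above n q v)"
    by (auto simp: blocks_def)
  have fB: "finite B" using Bsub winners_fin finite_subset by blast
  have eq: "(\<Sum>i<n. v i * (if i \<in> B then 1 else 0)) = (\<Sum>i\<in>B. v i)"
  proof -
    have "(\<Sum>i<n. v i * (if i \<in> B then 1 else 0)) = (\<Sum>i\<in>{..<n} \<inter> B. v i)"
      by (simp add: sum.inter_restrict[symmetric] indicator_def if_distrib cong: if_cong)
    also have "{..<n} \<inter> B = B" using Bsub winners_sub by blast
    finally show ?thesis .
  qed
  show "Lf m n q v \<le> (\<Sum>i<n. v i * (if i \<in> B then 1 else 0))"
  proof (cases "num_above n q v \<le> m")
    case True
    then have "B = winners_set n q v" using B blocks_small by blast
    then have "(\<Sum>i\<in>B. v i) = (\<Sum>i<n. if q \<le> v i then v i else 0)" by (simp add: sum_winners)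
    also have "\<dots> = (\<Sum>i<n. q * (if q \<le> v i then 1 else 0) + max (v i - q) 0)"
      by (intro sum.cong) auto
    also have "\<dots> = q * Nr n q v + Aq n q v"
      by (simp add: sum.distrib sum_distrib_left Nr_def Aq_def)
    also have "\<dots> = Lf m n q v"
      using True by (simp add: Lf_def Nr_card)
    finally show ?thesis using eq by simp
  next
    case False
    have s1: "(\<Sum>i\<in>B. q) \<le> (\<Sum>i\<in>B. v i)"
      using Bsub by (intro sum_mono) (auto simp: winners_set_def)
    have mm: "min m (num_above n q v) = m" using False by simp
    have s2: "(\<Sum>i\<in>B. q) = q * real m" using cB mm by (simp add: mult.commute)
    have "Lf m n q v = q * real m" using False cB by (simp add: Lf_def Nr_card)
    then show ?thesis using eq s1 s2 by linarith
  qed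
qed

lemma top_le_aux:
  fixes q :: real assumes "q \<ge> 0"
  shows "sum_list (take k ys) \<le> real k * q + sum_list (map (\<lambda>x. max (x - q) 0) ys)"
  using assms
proof (induction ys arbitrary: k)
  case Nil then show ?case by simp
next
  case (Cons y ys)
  show ?case
  proof (cases k)
    case 0
    have "0 \<le> sum_list (map (\<lambda>x. max (x - q) 0) (y # ys))"
      by (intro sum_list_nonneg) auto
    then show ?thesis using 0 by simp
  next
    case (Suc k')
    have IH: "sum_list (take k' ys) \<le> real k' * q + sum_list (map (\<lambda>x. max (x - q) 0) ys)"
      using Cons by blast
    have e1: "sum_list (take k (y#ys)) = y + sum_list (take k' ys)" using Suc by simp
    have e2: "sum_list (map (\<lambda>x. max (x - q) 0) (y#ys)) = max (y-q) 0 + sum_list (map (\<lambda>x. max (x - q) 0) ys)"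
      by simp
    have e0: "real k = real k' + 1" using Suc by simp
    have e3: "real k * q = real k' * q + q" unfolding e0 by (simp add: distrib_right)
    have "y \<le> q + max (y-q) 0" by simp
    then show ?thesis using IH e1 e2 e3 by linarith
  qed
qed

lemma perm_sum: "mset xs = mset ys \<Longrightarrow> sum_list (map (g::real\<Rightarrow>real) xs) = sum_list (map g ys)"
  by (metis mset_map sum_mset_sum_list)

lemma top_le:
  fixes q :: real assumes "q \<ge> 0" "k \<le> m"
  shows "top_sum k n v \<le> real m * q + Aq n q v"
proof -
  have "top_sum k n v \<le> real k * q + sum_list (map (\<lambda>x. max (x - q) 0) (rev (sort (map v [0..<n]))))"
    unfolding top_sum_def by (rule top_le_aux[OF assms(1)])
  also have "sum_list (map (\<lambda>x. max (x - q) 0) (rev (sort (map v [0..<n]))))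
      = sum_list (map (\<lambda>x. max (x - q) 0) (map v [0..<n]))"
    by (rule perm_sum) simp
  also have "\<dots> = Aq n q v"
    unfolding Aq_def map_map by (simp add: sum_set_upt_conv_sum_list_nat[symmetric] atLeast0LessThan comp_def)
  finally show ?thesis using assms mult_right_mono[of "real k" "real m" q] by simp
qed




locale twset =
  fixes F :: "real measure" and n :: nat
  assumes PF: "prob_space F" and SF: "sets F = sets borel" and IF: "integrable F (\<lambda>x. x)"
begin

abbreviation "M \<equiv> PiM {..<n} (\<lambda>_. F)"

sublocale PP: product_prob_space "\<lambda>_. F" "{..<n}"
  by (rule product_prob_spaceI) (rule PF)

lemma probM: "prob_space M"
  by (rule prob_space_PiM) (rule PF)

lemma comp_meas[measurable]: "k < n \<Longrightarrow> (\<lambda>v. v k) \<in> borel_measurable M"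
proof -
  assume k: "k < n"
  have "(\<lambda>v. v k) \<in> measurable M F"
    using k by (intro measurable_component_singleton) auto
  then show ?thesis using SF measurable_cong_sets by blast
qed

lemma distr_comp: "k < n \<Longrightarrow> distr M F (\<lambda>v. v k) = F"
  by (rule distr_PiM_component) (auto simp: PF)

lemma int_comp:
  fixes f :: "real \<Rightarrow> real"
  assumes f: "integrable F f" and k: "k < n"
  shows "integrable M (\<lambda>v. f (v k))"
proof -
  have meas: "(\<lambda>v. v k) \<in> measurable M F"
    using k by (intro measurable_component_singleton) auto
  have fm: "f \<in> borel_measurable F" using f by auto
  show ?thesis using integrable_distr_eq[OF meas fm] distr_comp[OF k] f by simp
qed

lemma integral_comp:
  fixes f :: "real \<Rightarrow> real"
  assumes f: "integrable F f" and k: "k < n"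
  shows "(\<integral>v. f (v k) \<partial>M) = (\<integral>x. f x \<partial>F)"
proof -
  have meas: "(\<lambda>v. v k) \<in> measurable M F"
    using k by (intro measurable_component_singleton) auto
  have fm: "f \<in> borel_measurable F" using f by auto
  show ?thesis using integral_distr[OF meas fm] distr_comp[OF k] by simp
qed

lemma int_bq: "integrable F (\<lambda>x. max (x - q) 0)"
  using IF by (intro integrable_max integrable_diff PP.M.integrable_const) auto

lemma indep:
  fixes a :: "(nat \<Rightarrow> real) \<Rightarrow> real" and b :: "real \<Rightarrow> real"
  assumes k: "k < n" and a_ind: "\<And>x y. a (x(k:=y)) = a x"
    and int: "integrable M (\<lambda>v. a v * b (v k))"
  shows "(\<integral>v. a v * b (v k) \<partial>M) = (\<integral>v. a v \<partial>PiM ({..<n}-{k}) (\<lambda>_. F)) * (\<integral>x. b x \<partial>F)"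
proof -
  define J where "J = {..<n} - {k}"
  have I: "{..<n} = insert k J" using k by (auto simp: J_def)
  have fJ: "finite J" "k \<notin> J" by (auto simp: J_def)
  have int': "integrable (PiM (insert k J) (\<lambda>_. F)) (\<lambda>v. a v * b (v k))"
    using int unfolding I .
  have "(\<integral>v. a v * b (v k) \<partial>M) = (\<integral>v. a v * b (v k) \<partial>PiM (insert k J) (\<lambda>_. F))"
    unfolding I ..
  also have "\<dots> = (\<integral>x. (\<integral>y. a (x(k:=y)) * b ((x(k:=y)) k) \<partial>F) \<partial>PiM J (\<lambda>_. F))"
    by (rule PP.product_integral_insert[OF fJ int'])
  also have "\<dots> = (\<integral>x. a x * (\<integral>y. b y \<partial>F) \<partial>PiM J (\<lambda>_. F))"
    by (simp add: a_ind)
  also have "\<dots> = (\<integral>v. a v \<partial>PiM J (\<lambda>_. F)) * (\<integral>x. b x \<partial>F)"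
    by simp
  finally show ?thesis unfolding J_def .
qed

end



definition blk :: "nat \<Rightarrow> nat set \<Rightarrow> nat set set" where
  "blk m A = {B. B \<subseteq> A \<and> card B = min m (card A)}"

definition rho :: "nat \<Rightarrow> nat \<Rightarrow> nat set \<Rightarrow> real" where
  "rho m i A = measure_pmf.expectation (pmf_of_set (blk m A)) (\<lambda>B. if i \<in> B then 1 else 0)"

lemma blocks_blk: "blocks m n q v = blk m (winners_set n q v)"
  by (simp add: blocks_def blk_def num_above_def)

lemma wf_eq:
  "measure_pmf.expectation (tw_alloc m n q v) (\<lambda>B. \<Sum>i<n. v i * (if i \<in> B then 1 else 0))
    = (\<Sum>i<n. v i * rho m i (winners_set n q v))"
proof -
  let ?S = "blk m (winners_set n q v)"
  have ne: "?S \<noteq> {}" and fin: "finite ?S"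
    using blocks_ne[of m n q v] blocks_fin[of m n q v] by (simp_all add: blocks_blk)
  have "measure_pmf.expectation (tw_alloc m n q v) (\<lambda>B. \<Sum>i<n. v i * (if i \<in> B then 1 else 0))
     = (\<Sum>B\<in>?S. \<Sum>i<n. v i * (if i \<in> B then 1 else 0)) / card ?S"
    unfolding tw_alloc_def blocks_blk by (rule integral_pmf_of_set[OF ne fin])
  also have "\<dots> = (\<Sum>i<n. v i * ((\<Sum>B\<in>?S. (if i \<in> B then 1 else 0)) / card ?S))"
    by (simp add: sum.swap[of _ ?S] sum_divide_distrib sum_distrib_left)
  also have "\<dots> = (\<Sum>i<n. v i * rho m i (winners_set n q v))"
    unfolding rho_def by (simp add: integral_pmf_of_set[OF ne fin])
  finally show ?thesis .
qed

lemma winners_eq_iff: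
  assumes "A \<subseteq> {..<n}"
  shows "winners_set n q v = A \<longleftrightarrow>
    (\<Sum>i<n. \<bar>(if q \<le> v i then 1::real else 0) - (if i \<in> A then 1 else 0)\<bar>) = 0"
proof -
  have "(\<Sum>i<n. \<bar>(if q \<le> v i then 1::real else 0) - (if i \<in> A then 1 else 0)\<bar>) = 0
     \<longleftrightarrow> (\<forall>i\<in>{..<n}. \<bar>(if q \<le> v i then 1::real else 0) - (if i \<in> A then 1 else 0)\<bar> = 0)"
    by (rule sum_nonneg_eq_0_iff) auto
  also have "\<dots> \<longleftrightarrow> (\<forall>i\<in>{..<n}. (q \<le> v i) = (i \<in> A))"
    by auto
  also have "\<dots> \<longleftrightarrow> winners_set n q v = A"
    using assms by (auto simp: winners_set_def)
  finally show ?thesis by simp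
qed

context twset
begin

lemma SA_sets:
  assumes "A \<subseteq> {..<n}"
  shows "{v \<in> space M. winners_set n q v = A} \<in> sets M"
proof -
  have "{v \<in> space M. winners_set n q v = A} =
     {v \<in> space M. (\<Sum>i<n. \<bar>(if q \<le> v i then 1::real else 0) - (if i \<in> A then 1 else 0)\<bar>) = 0}"
    using winners_eq_iff[OF assms] by blast
  also have "\<dots> \<in> sets M" by measurable
  finally show ?thesis .
qed

lemma wf_integrable:
  "integrable M (\<lambda>v. measure_pmf.expectation (tw_alloc m n q v)
      (\<lambda>B. \<Sum>i<n. v i * (if i \<in> B then 1 else 0)))"
proof -
  let ?SA = "\<lambda>A. {v \<in> space M. winners_set n q v = A}"
  have I1: "integrable M (\<lambda>v. \<Sum>i<n. \<Sum>A\<in>Pow {..<n}. (v i * rho m i A) * indicator (?SA A) v)"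
  proof (rule Bochner_Integration.integrable_sum)
    fix i assume i: "i \<in> {..<n}"
    show "integrable M (\<lambda>v. \<Sum>A\<in>Pow {..<n}. (v i * rho m i A) * indicator (?SA A) v)"
    proof (rule Bochner_Integration.integrable_sum)
      fix A assume A: "A \<in> Pow {..<n}"
      have "integrable M (\<lambda>v. v i)" using int_comp[OF IF] i by simp
      then have "integrable M (\<lambda>v. v i * rho m i A)" by simp
      then show "integrable M (\<lambda>v. (v i * rho m i A) * indicator (?SA A) v)"
        using A by (intro integrable_real_mult_indicator SA_sets) auto
    qed
  qed
  have E: "(\<Sum>i<n. \<Sum>A\<in>Pow {..<n}. (v i * rho m i A) * indicator (?SA A) v)
      = measure_pmf.expectation (tw_alloc m n q v) (\<lambda>B. \<Sum>i<n. v i * (if i \<in> B then 1 else 0))"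
    if v: "v \<in> space M" for v
  proof -
    have "(\<Sum>A\<in>Pow {..<n}. (v i * rho m i A) * indicator (?SA A) v) = v i * rho m i (winners_set n q v)"
      for i
    proof -
      have "(\<Sum>A\<in>Pow {..<n}. (v i * rho m i A) * indicator (?SA A) v)
          = (\<Sum>A\<in>Pow {..<n}. if winners_set n q v = A then v i * rho m i A else 0)"
        using v by (intro sum.cong) (auto simp: indicator_def)
      also have "\<dots> = v i * rho m i (winners_set n q v)"
        using winners_sub[of n q v] by (simp add: sum.delta)
      finally show ?thesis .
    qed
    then show ?thesis by (simp add: wf_eq)
  qed
  show ?thesis
    by (rule iffD1[OF Bochner_Integration.integrable_cong[OF refl E] I1])
qed

end



context twset
begin

lemma Nr_meas[measurable]: "(\<lambda>v. Nr n q v) \<in> borel_measurable M"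
  unfolding Nr_def by measurable

lemma Nr_nonneg: "0 \<le> Nr n q v"
  unfolding Nr_def by (intro sum_nonneg) auto

lemma Xf_meas[measurable]: "(\<lambda>v. Xf \<delta> m n q v) \<in> borel_measurable M"
  unfolding Xf_def by measurable

lemma Aq_meas[measurable]: "(\<lambda>v. Aq n q v) \<in> borel_measurable M"
  unfolding Aq_def by measurable

lemma Aq_int: "integrable M (\<lambda>v. Aq n q v)"
  unfolding Aq_def by (intro Bochner_Integration.integrable_sum int_comp int_bq) auto

lemma Aq_integral: "(\<integral>v. Aq n q v \<partial>M) = real n * (\<integral>x. max (x - q) 0 \<partial>F)"
proof -
  have "(\<integral>v. Aq n q v \<partial>M) = (\<Sum>i<n. \<integral>v. max (v i - q) 0 \<partial>M)"
    unfolding Aq_def by (rule Bochner_Integration.integral_sum) (auto intro: int_comp int_bq)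
  also have "\<dots> = (\<Sum>i<n. \<integral>x. max (x - q) 0 \<partial>F)"
    by (intro sum.cong refl integral_comp[OF int_bq]) auto
  finally show ?thesis by simp
qed

lemma sum_terms_bound:
  assumes q: "q > 0" and d: "\<delta> > 0"
  shows "0 \<le> (\<Sum>i<n. if q \<le> v i then min (v i) ((1 + \<delta>) * q) else 0)"
    and "(\<Sum>i<n. if q \<le> v i then min (v i) ((1 + \<delta>) * q) else 0) \<le> (1 + \<delta>) * q * Nr n q v"
proof -
  show "0 \<le> (\<Sum>i<n. if q \<le> v i then min (v i) ((1 + \<delta>) * q) else 0)"
    using q d by (intro sum_nonneg) auto
  have "(\<Sum>i<n. if q \<le> v i then min (v i) ((1 + \<delta>) * q) else 0)
      \<le> (\<Sum>i<n. (1 + \<delta>) * q * (if q \<le> v i then 1 else 0))"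
    by (intro sum_mono) auto
  then show "(\<Sum>i<n. if q \<le> v i then min (v i) ((1 + \<delta>) * q) else 0) \<le> (1 + \<delta>) * q * Nr n q v"
    by (simp add: Nr_def sum_distrib_left)
qed

lemma Nr_le_n: "Nr n q v \<le> real n"
proof -
  have "Nr n q v \<le> (\<Sum>i<n. (1::real))" unfolding Nr_def by (intro sum_mono) auto
  then show ?thesis by simp
qed

lemma Xf_bounds:
  assumes q: "q > 0" and d: "\<delta> > 0" and m: "m \<ge> 1"
  shows "0 \<le> Xf \<delta> m n q v" "Xf \<delta> m n q v \<le> (1 + \<delta>) * q * (real n + 1)"
    "real m * Xf \<delta> m n q v \<le> (1 + \<delta>) * q * min (real m) (Nr n q v)"
    "(1 + \<delta>) * q * (1 - (if Nr n q v < real m then 1 else 0)) \<le> Xf \<delta> m n q v"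
proof -
  let ?S = "(\<Sum>i<n. if q \<le> v i then min (v i) ((1 + \<delta>) * q) else 0)"
  have S0: "0 \<le> ?S" and S1: "?S \<le> (1 + \<delta>) * q * Nr n q v"
    using sum_terms_bound[OF q d] by auto
  have cq: "0 \<le> (1 + \<delta>) * q" using q d by simp
  have mpos: "real m \<ge> 1" using m by simp
  show "0 \<le> Xf \<delta> m n q v" unfolding Xf_def using S0 cq by auto
  have Sn: "?S \<le> (1 + \<delta>) * q * real n"
    using S1 Nr_le_n[of q v] cq by (meson order_trans mult_left_mono)
  have "?S * 1 \<le> ?S * real m" using S0 mpos by (intro mult_left_mono) auto
  then have "?S / real m \<le> ?S" using mpos by (simp add: divide_le_eq)
  then show "Xf \<delta> m n q v \<le> (1 + \<delta>) * q * (real n + 1)"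
    unfolding Xf_def using Sn cq mult_nonneg_nonneg[OF cq, of "real n"] by (auto simp: algebra_simps)
  show "real m * Xf \<delta> m n q v \<le> (1 + \<delta>) * q * min (real m) (Nr n q v)"
  proof (cases "Nr n q v < real m")
    case True
    then have "real m * Xf \<delta> m n q v = ?S" unfolding Xf_def using mpos by simp
    then show ?thesis using S1 True by simp
  next
    case False
    then show ?thesis unfolding Xf_def by (simp add: algebra_simps)
  qed
  show "(1 + \<delta>) * q * (1 - (if Nr n q v < real m then 1 else 0)) \<le> Xf \<delta> m n q v"
    unfolding Xf_def using S0 mpos by auto
qed

end



context twset
begin

lemma key_i:
  assumes i: "i < n" and q: "q > 0"
  shows "(\<integral>v. (if Nr n q v < real m then 1 else 0) \<partial>M) * (\<integral>x. max (x - q) 0 \<partial>F)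
    \<le> (\<integral>v. (if Nr n q v \<le> real m then 1 else 0) * max (v i - q) 0 \<partial>M)"
proof -
  define a where "a v = (if (\<Sum>j\<in>{..<n}-{i}. if q \<le> v j then 1::real else 0) \<le> real m - 1 then 1 else 0::real)" for v
  define pN where "pN v = (if Nr n q v < real m then 1 else 0::real)" for v
  define ind where "ind v = (if Nr n q v \<le> real m then 1 else 0::real)" for v
  have a_meas[measurable]: "a \<in> borel_measurable M" unfolding a_def using i by measurable
  have pN_meas[measurable]: "pN \<in> borel_measurable M" unfolding pN_def by measurable
  have ind_meas[measurable]: "ind \<in> borel_measurable M" unfolding ind_def by measurable
  have a_ind: "a (x(i:=y)) = a x" for x y
  proof -
    have "(\<Sum>j\<in>{..<n}-{i}. if q \<le> (x(i:=y)) j then 1::real else 0) = (\<Sum>j\<in>{..<n}-{i}. if q \<le> x j then 1::real else 0)"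
      by (rule sum.cong) auto
    then show ?thesis unfolding a_def by simp
  qed
  have bi: "integrable M (\<lambda>v. max (v i - q) 0)" using int_comp[OF int_bq i] .
  have bm[measurable]: "(\<lambda>v. max (v i - q) 0) \<in> borel_measurable M" using bi by auto
  have a_int: "integrable M a"
    by (rule PP.P.integrable_const_bound[where B=1]) (auto simp: a_def)
  have pN_int: "integrable M pN"
    by (rule PP.P.integrable_const_bound[where B=1]) (auto simp: pN_def)
  have ab_int: "integrable M (\<lambda>v. a v * max (v i - q) 0)"
    by (rule Bochner_Integration.integrable_bound[OF bi]) (measurable, auto simp: a_def)
  have ib_int: "integrable M (\<lambda>v. ind v * max (v i - q) 0)"
    by (rule Bochner_Integration.integrable_bound[OF bi]) (measurable, auto simp: ind_def)
  have a1: "(\<integral>v. a v * max (v i - q) 0 \<partial>M) = (\<integral>v. a v \<partial>PiM ({..<n}-{i}) (\<lambda>_. F)) * (\<integral>x. max (x - q) 0 \<partial>F)"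
    by (rule indep[OF i a_ind ab_int])
  have a1': "integrable M (\<lambda>v. a v * (\<lambda>_. 1::real) (v i))" using a_int by simp
  have a2: "(\<integral>v. a v * (\<lambda>_. 1::real) (v i) \<partial>M) = (\<integral>v. a v \<partial>PiM ({..<n}-{i}) (\<lambda>_. F)) * (\<integral>x. (\<lambda>_. 1::real) x \<partial>F)"
    by (rule indep[OF i a_ind a1'])
  have "(\<integral>x. (\<lambda>_. 1::real) x \<partial>F) = 1" using PF by (simp add: prob_space.prob_space)
  then have a3: "(\<integral>v. a v \<partial>M) = (\<integral>v. a v \<partial>PiM ({..<n}-{i}) (\<lambda>_. F))" using a2 by simp
  have pa: "pN v \<le> a v" for v
  proof (cases "Nr n q v < real m")
    case True
    then have "num_above n q v < m" by (simp add: Nr_card)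
    then have "real (num_above n q v) + 1 \<le> real m" by linarith
    then have N1: "Nr n q v \<le> real m - 1" by (simp add: Nr_card)
    have "(\<Sum>j\<in>{..<n}-{i}. if q \<le> v j then 1::real else 0) \<le> Nr n q v"
      unfolding Nr_def by (rule sum_mono2) auto
    then show ?thesis using N1 True by (simp add: a_def pN_def)
  next
    case False
    then show ?thesis by (simp add: a_def pN_def)
  qed
  have ab: "a v * max (v i - q) 0 \<le> ind v * max (v i - q) 0" for v
  proof (cases "q < v i")
    case True
    have "Nr n q v = (if q \<le> v i then 1 else 0) + (\<Sum>j\<in>{..<n}-{i}. if q \<le> v j then 1::real else 0)"
      unfolding Nr_def using i by (subst sum.remove[of _ i]) auto
    then have "Nr n q v = 1 + (\<Sum>j\<in>{..<n}-{i}. if q \<le> v j then 1::real else 0)" using True by simp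
    then have "a v \<le> ind v" by (auto simp: a_def ind_def)
    then show ?thesis by (intro mult_right_mono) auto
  next
    case False
    then show ?thesis by simp
  qed
  have "(\<integral>v. pN v \<partial>M) \<le> (\<integral>v. a v \<partial>M)"
    by (rule integral_mono[OF pN_int a_int pa])
  moreover have "0 \<le> (\<integral>x. max (x - q) 0 \<partial>F)" by (rule Bochner_Integration.integral_nonneg) auto
  ultimately have "(\<integral>v. pN v \<partial>M) * (\<integral>x. max (x - q) 0 \<partial>F) \<le> (\<integral>v. a v \<partial>M) * (\<integral>x. max (x - q) 0 \<partial>F)"
    by (rule mult_right_mono)
  also have "\<dots> = (\<integral>v. a v * max (v i - q) 0 \<partial>M)" using a1 a3 by simp
  also have "\<dots> \<le> (\<integral>v. ind v * max (v i - q) 0 \<partial>M)"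
    by (rule integral_mono[OF ab_int ib_int ab])
  finally show ?thesis unfolding pN_def ind_def .
qed

end



context twset
begin

lemma main_loc:
  assumes m: "m \<ge> 1" and a0: "0 < \<alpha>" and d: "0 < \<delta>" and q: "q > 0"
    and eq: "expected_T \<alpha> \<delta> m n F q = q"
  shows "welfare m n F q \<ge> OPT m n F / (2 * (1 + \<delta>)) * min 1 \<delta>"
proof -
  have VM: "values_measure n F = M" by (simp add: values_measure_def)
  have ic: "(\<integral>v. c \<partial>M) = c" for c :: real by (simp add: PP.P.prob_space)
  define Eb where "Eb = (\<integral>x. max (x - q) 0 \<partial>F)"
  have Eb0: "0 \<le> Eb" unfolding Eb_def by (rule Bochner_Integration.integral_nonneg) auto
  have Xint: "integrable M (\<lambda>v. Xf \<delta> m n q v)"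
    by (rule PP.P.integrable_const_bound[where B="(1 + \<delta>) * q * (real n + 1)"])
      (use Xf_bounds[OF q d m] in auto)
  have EX: "(\<integral>v. Xf \<delta> m n q v \<partial>M) = q"
  proof -
    have "expected_T \<alpha> \<delta> m n F q = (\<integral>v. \<alpha> * Xf \<delta> m n q v + (1 - \<alpha>) * q \<partial>M)"
      unfolding expected_T_def VM by (simp add: ET_pointwise)
    also have "\<dots> = \<alpha> * (\<integral>v. Xf \<delta> m n q v \<partial>M) + (1 - \<alpha>) * q"
      using Xint by (subst Bochner_Integration.integral_add) (auto simp: ic PP.P.prob_space)
    finally have "\<alpha> * (\<integral>v. Xf \<delta> m n q v \<partial>M) + (1 - \<alpha>) * q = q" using eq by simp
    then have "\<alpha> * ((\<integral>v. Xf \<delta> m n q v \<partial>M) - q) = 0" by (simp add: algebra_simps)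
    then show ?thesis using a0 by simp
  qed
  define mr where "mr v = min (real m) (Nr n q v)" for v
  have mr_meas[measurable]: "mr \<in> borel_measurable M" unfolding mr_def by measurable
  have mr_int: "integrable M mr"
    by (rule PP.P.integrable_const_bound[where B="real m"]) (auto simp: mr_def Nr_nonneg)
  have Emr: "real m * q \<le> (1 + \<delta>) * q * (\<integral>v. mr v \<partial>M)"
  proof -
    have "(\<integral>v. real m * Xf \<delta> m n q v \<partial>M) \<le> (\<integral>v. (1 + \<delta>) * q * mr v \<partial>M)"
    proof (rule integral_mono)
      show "real m * Xf \<delta> m n q v \<le> (1 + \<delta>) * q * mr v" for v
        using Xf_bounds(3)[OF q d m] by (simp add: mr_def)
    qed (use Xint mr_int in auto)
    then show ?thesis using EX by simp
  qed
  define pN where "pN v = (if Nr n q v < real m then 1 else 0::real)" for v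
  have pN_meas[measurable]: "pN \<in> borel_measurable M" unfolding pN_def by measurable
  have pN_int: "integrable M pN"
    by (rule PP.P.integrable_const_bound[where B=1]) (auto simp: pN_def)
  have EP: "\<delta> \<le> (1 + \<delta>) * (\<integral>v. pN v \<partial>M)"
  proof -
    have "(\<integral>v. (1 + \<delta>) * q * (1 - pN v) \<partial>M) \<le> (\<integral>v. Xf \<delta> m n q v \<partial>M)"
    proof (rule integral_mono)
      show "(1 + \<delta>) * q * (1 - pN v) \<le> Xf \<delta> m n q v" for v
        using Xf_bounds(4)[OF q d m] by (simp add: pN_def)
    qed (use Xint pN_int in auto)
    moreover have "(\<integral>v. (1 + \<delta>) * q * (1 - pN v) \<partial>M) = (1 + \<delta>) * q * (1 - (\<integral>v. pN v \<partial>M))"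
      using pN_int by (simp add: Bochner_Integration.integral_diff ic PP.P.prob_space)
    ultimately have "(1 + \<delta>) * q * (1 - (\<integral>v. pN v \<partial>M)) \<le> q * 1" using EX by linarith
    then have "(1 + \<delta>) * (1 - (\<integral>v. pN v \<partial>M)) \<le> 1"
      using q by (simp add: mult.assoc mult.left_commute[of q])
    then show ?thesis by (simp add: algebra_simps)
  qed
  define ind where "ind v = (if Nr n q v \<le> real m then 1 else 0::real)" for v
  have ind_meas[measurable]: "ind \<in> borel_measurable M" unfolding ind_def by measurable
  have ind_int: "integrable M (\<lambda>v. ind v * max (v i - q) 0)" if i: "i < n" for i
  proof -
    have bi: "integrable M (\<lambda>v. max (v i - q) 0)" using int_comp[OF int_bq i] .
    have bm[measurable]: "(\<lambda>v. max (v i - q) 0) \<in> borel_measurable M" using bi by auto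
    show ?thesis
      by (rule Bochner_Integration.integrable_bound[OF bi]) (measurable, auto simp: ind_def)
  qed
  have Lf_eq: "Lf m n q v = q * mr v + (\<Sum>i<n. ind v * max (v i - q) 0)" for v
    by (simp add: Lf_def mr_def ind_def Aq_def sum_distrib_left[symmetric])
  have Lint: "integrable M (\<lambda>v. Lf m n q v)"
    unfolding Lf_eq using mr_int ind_int by (intro Bochner_Integration.integrable_add
        Bochner_Integration.integrable_sum) auto
  have ELf: "(\<integral>v. Lf m n q v \<partial>M) = q * (\<integral>v. mr v \<partial>M) + (\<Sum>i<n. \<integral>v. ind v * max (v i - q) 0 \<partial>M)"
  proof -
    have si: "integrable M (\<lambda>v. \<Sum>i<n. ind v * max (v i - q) 0)"
      using ind_int by (intro Bochner_Integration.integrable_sum) auto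
    have "(\<integral>v. q * mr v + (\<Sum>i<n. ind v * max (v i - q) 0) \<partial>M)
        = (\<integral>v. q * mr v \<partial>M) + (\<integral>v. (\<Sum>i<n. ind v * max (v i - q) 0) \<partial>M)"
      by (rule Bochner_Integration.integral_add) (use mr_int si in auto)
    also have "(\<integral>v. (\<Sum>i<n. ind v * max (v i - q) 0) \<partial>M) = (\<Sum>i<n. \<integral>v. ind v * max (v i - q) 0 \<partial>M)"
      by (rule Bochner_Integration.integral_sum) (use ind_int in auto)
    finally show ?thesis unfolding Lf_eq by simp
  qed
  have Esum: "real n * ((\<integral>v. pN v \<partial>M) * Eb) \<le> (\<Sum>i<n. \<integral>v. ind v * max (v i - q) 0 \<partial>M)"
  proof -
    have "(\<Sum>i<n. (\<integral>v. pN v \<partial>M) * Eb) \<le> (\<Sum>i<n. \<integral>v. ind v * max (v i - q) 0 \<partial>M)"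
      by (intro sum_mono) (use key_i[OF _ q] in \<open>auto simp: pN_def ind_def Eb_def\<close>)
    then show ?thesis by simp
  qed
  have W1: "(\<integral>v. Lf m n q v \<partial>M) \<le> welfare m n F q"
    unfolding welfare_def VM
    by (rule integral_mono[OF Lint wf_integrable W_pointwise[OF q]])
  have U: "OPT m n F \<le> real m * q + real n * Eb"
  proof (cases "integrable M (\<lambda>v. top_sum (min m n) n v)")
    case True
    have "OPT m n F \<le> (\<integral>v. real m * q + Aq n q v \<partial>M)"
      unfolding OPT_def VM
      by (rule integral_mono) (use True Aq_int q in \<open>auto intro!: top_le\<close>)
    also have "\<dots> = real m * q + real n * Eb"
      using Aq_int by (simp add: Bochner_Integration.integral_add ic Aq_integral Eb_def PP.P.prob_space)
    finally show ?thesis .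
  next
    case False
    then have "OPT m n F = 0" unfolding OPT_def VM by (rule not_integrable_integral_eq)
    then show ?thesis using Eb0 q by simp
  qed
  define W where "W = welfare m n F q"
  define P where "P = (\<integral>v. pN v \<partial>M)"
  define E where "E = (\<integral>v. mr v \<partial>M)"
  have h1: "q * E + real n * (P * Eb) \<le> W"
    using W1 ELf Esum unfolding W_def P_def E_def by linarith
  have h2: "real m * q \<le> (1 + \<delta>) * q * E" using Emr unfolding E_def .
  have h3: "\<delta> \<le> (1 + \<delta>) * P" using EP unfolding P_def .
  have nE: "0 \<le> real n * Eb" using Eb0 by simp
  have h4: "\<delta> * (real n * Eb) \<le> (1 + \<delta>) * (real n * (P * Eb))"
    using mult_right_mono[OF h3 nE] by (simp add: algebra_simps)
  have h5: "real m * q + \<delta> * (real n * Eb) \<le> (1 + \<delta>) * W"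
  proof -
    have "(1 + \<delta>) * (q * E + real n * (P * Eb)) \<le> (1 + \<delta>) * W"
      using h1 d by (intro mult_left_mono) auto
    then show ?thesis using h2 h4 by (simp add: algebra_simps)
  qed
  define c where "c = min 1 \<delta>"
  have c0: "0 \<le> c" "c \<le> 1" "c \<le> \<delta>" using d by (auto simp: c_def)
  have mq0: "0 \<le> real m * q" using q by simp
  have h6: "c * (real m * q + real n * Eb) \<le> real m * q + \<delta> * (real n * Eb)"
  proof -
    have "c * (real m * q) \<le> real m * q" using mult_right_mono[OF c0(2) mq0] by simp
    moreover have "c * (real n * Eb) \<le> \<delta> * (real n * Eb)" using mult_right_mono[OF c0(3) nE] .
    ultimately show ?thesis by (simp add: algebra_simps)
  qed
  have W0: "0 \<le> W"
  proof -
    have "0 \<le> q * E + real n * (P * Eb)"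
    proof -
      have "0 \<le> E" unfolding E_def by (rule Bochner_Integration.integral_nonneg) (auto simp: mr_def Nr_nonneg)
      moreover have "0 \<le> P" unfolding P_def by (rule Bochner_Integration.integral_nonneg) (auto simp: pN_def)
      ultimately show ?thesis using q Eb0 by simp
    qed
    then show ?thesis using h1 by linarith
  qed
  have "OPT m n F * c \<le> (real m * q + real n * Eb) * c" using mult_right_mono[OF U c0(1)] .
  also have "\<dots> \<le> (1 + \<delta>) * W" using h5 h6 by (simp add: mult.commute)
  also have "\<dots> \<le> 2 * (1 + \<delta>) * W" using W0 d by (simp add: algebra_simps)
  finally have "OPT m n F * c \<le> 2 * (1 + \<delta>) * W" .
  then have "OPT m n F * c / (2 * (1 + \<delta>)) \<le> W" using d by (simp add: divide_le_eq mult.commute)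
  then show ?thesis unfolding W_def c_def by (simp add: mult.commute)
qed

end


theorem mainTheorem11:
  fixes F :: "real measure" and m n :: nat and \<alpha> \<delta> q :: real
  assumes "prob_space F" and "sets F = sets borel"
    and "AE x in F. 0 \<le> x" and "integrable F (\<lambda>x. x)"
    and "m \<ge> 1"
    and "0 < \<alpha>" and "\<alpha> < 1" and "0 < \<delta>"
    and "q > 0"
    and "equilibrium_price \<alpha> \<delta> m n F q"
  shows "welfare m n F q \<ge> OPT m n F / (2 * (1 + \<delta>)) * min 1 \<delta>"
proof -
  have tw: "twset F" by (rule twset.intro) (fact assms(1), fact assms(2), fact assms(4))
  have e: "expected_T \<alpha> \<delta> m n F q = q" using assms(10) by (simp add: equilibrium_price_def)
  show ?thesis
    by (rule twset.main_loc[OF tw assms(5) assms(6) assms(8) assms(9) e])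
qed

end
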